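(* Under the standing assumptions below, and for $x$ sufficiently large (in terms of $\epsilon$), if $|U|\geq 2$ then all elements of $A$ are even and there exists $a\in\{1,\dots,8\}$ such that for every $n\in A$: $n\equiv 2\pmod 4\iff n\equiv a\pmod 9$, and $n\equiv 0\pmod 4\iff n\equiv -a\pmod 9$.
   Context: Standing assumptions and notation: $\epsilon>0$ is fixed, $\delta_0=\frac14-\frac{2}{\pi^2}$, and $A\subseteq[1,x]\cap\mathbb{N}$ is a set with $|A|>(\delta_0+\epsilon)x$ such that $A+A=\{a+b:a,b\in A\}$ contains no squarefree integer, and $A$ is not a subset of $4\mathbb{N}$, nor of $9\mathbb{N}$, nor of $\{n\in\mathbb{N}:n\equiv 2\pmod 4\}$. For $a\in\{0,\dots,35\}$ put $\delta_a=\frac{36\cdot\#\{n\in A: n\equiv a\pmod{36}\}}{x}$. Let $U$ be the set of residues $a\bmod 36$ with $\delta_a>1-\frac{9}{\pi^2}+\epsilon/100$, let $V$ be the set of residues $a\bmod 36$ with $\delta_a>0$, and let $Q=\{0,4,8,9,12,16,18,20,24,27,28,32\}$ (the residue classes mod $36$ containing no squarefree integers). *)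

theory Defs
  imports Complex_Main "HOL-Computational_Algebra.Squarefree"
begin

definition delta0 :: real where
  "delta0 = 1/4 - 2 / pi^2"

definition sumset :: "nat set \<Rightarrow> nat set" where
  "sumset A = {a + b | a b. a \<in> A \<and> b \<in> A}"

definition res_density :: "nat set \<Rightarrow> real \<Rightarrow> nat \<Rightarrow> real" where
  "res_density A x a = 36 * real (card {n \<in> A. n mod 36 = a}) / x"

definition U_set :: "real \<Rightarrow> nat set \<Rightarrow> real \<Rightarrow> nat set" where
  "U_set \<epsilon> A x = {a. a < 36 \<and> res_density A x a > 1 - 9 / pi^2 + \<epsilon> / 100}"

end

theory Submission
  imports Defs "HOL-Analysis.Analysis" "HOL-Number_Theory.Cong" "HOL-Real_Asymp.Real_Asymp"
begin


lemma card_nat_interval: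
  fixes c d :: real
  assumes "-1 < c" "c \<le> d"
  shows "real (card {k::nat. c < real k \<and> real k \<le> d}) \<le> d - c + 1"
    and "real (card {k::nat. c < real k \<and> real k \<le> d}) \<ge> d - c - 1"
proof -
  have fl: "\<lfloor>c\<rfloor> \<ge> -1" using assms(1) by (simp add: le_floor_iff)
  have "int ` {k::nat. c < real k \<and> real k \<le> d} = {\<lfloor>c\<rfloor><..\<lfloor>d\<rfloor>}"
  proof (intro set_eqI iffI)
    fix i assume "i \<in> int ` {k::nat. c < real k \<and> real k \<le> d}"
    then obtain k where "i = int k" "c < real k" "real k \<le> d" by auto
    moreover have "\<lfloor>c\<rfloor> < int k" using \<open>c < real k\<close> by (metis floor_less_iff of_int_of_nat_eq)
    moreover have "int k \<le> \<lfloor>d\<rfloor>" using \<open>real k \<le> d\<close> by (metis le_floor_iff of_int_of_nat_eq)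
    ultimately show "i \<in> {\<lfloor>c\<rfloor><..\<lfloor>d\<rfloor>}" by simp
  next
    fix i assume i: "i \<in> {\<lfloor>c\<rfloor><..\<lfloor>d\<rfloor>}"
    then have "i \<ge> 0" using fl by auto
    then obtain k where k: "i = int k" by (metis nonneg_int_cases)
    have "\<lfloor>c\<rfloor> < int k" "int k \<le> \<lfloor>d\<rfloor>" using i k by auto
    then have "c < real k" "real k \<le> d" by (metis floor_less_iff of_int_of_nat_eq, metis le_floor_iff of_int_of_nat_eq)
    then show "i \<in> int ` {k::nat. c < real k \<and> real k \<le> d}" using k by auto
  qed
  then have "card {k::nat. c < real k \<and> real k \<le> d} = nat (\<lfloor>d\<rfloor> - \<lfloor>c\<rfloor>)"
  proof -
    assume h: "int ` {k::nat. c < real k \<and> real k \<le> d} = {\<lfloor>c\<rfloor><..\<lfloor>d\<rfloor>}"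
    have "card {k::nat. c < real k \<and> real k \<le> d} = card (int ` {k::nat. c < real k \<and> real k \<le> d})"
      by (rule card_image[symmetric]) (simp add: inj_on_def)
    also have "\<dots> = nat (\<lfloor>d\<rfloor> - \<lfloor>c\<rfloor>)" unfolding h by simp
    finally show ?thesis .
  qed
  moreover have "\<lfloor>c\<rfloor> \<le> \<lfloor>d\<rfloor>" using assms(2) floor_mono by blast
  ultimately have eq: "real (card {k::nat. c < real k \<and> real k \<le> d}) = of_int \<lfloor>d\<rfloor> - of_int \<lfloor>c\<rfloor>"
    by simp
  show "real (card {k::nat. c < real k \<and> real k \<le> d}) \<le> d - c + 1"
    unfolding eq using of_int_floor_le[of d] real_of_int_floor_gt_diff_one[of c] by linarith
  show "real (card {k::nat. c < real k \<and> real k \<le> d}) \<ge> d - c - 1"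
    unfolding eq using of_int_floor_le[of c] real_of_int_floor_gt_diff_one[of d] by linarith
qed

lemma finite_le_real: "finite {n::nat. real n \<le> b \<and> P n}"
proof (rule finite_subset[of _ "{..nat \<lceil>b\<rceil>}"])
  show "{n::nat. real n \<le> b \<and> P n} \<subseteq> {..nat \<lceil>b\<rceil>}"
  proof
    fix n assume "n \<in> {n::nat. real n \<le> b \<and> P n}"
    then have "real n \<le> b" by simp
    then have "of_int (int n) \<le> b" by simp
    then have "int n \<le> \<lceil>b\<rceil>" by (meson le_ceiling_iff order_trans order_refl le_of_int_ceiling of_int_le_iff)
    then show "n \<in> {..nat \<lceil>b\<rceil>}" by simp
  qed
qed simp

lemma card_class:
  fixes a b :: real
  assumes "0 \<le> a" "a \<le> b" "r < (36::nat)"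
  shows "\<bar>real (card {n::nat. a < real n \<and> real n \<le> b \<and> n mod 36 = r}) - (b - a)/36\<bar> \<le> 1"
proof -
  let ?c = "(a - r)/36" and ?d = "(b - r)/36"
  have "{n::nat. a < real n \<and> real n \<le> b \<and> n mod 36 = r} =
        (\<lambda>k. 36*k + r) ` {k::nat. ?c < real k \<and> real k \<le> ?d}"
  proof (intro set_eqI iffI)
    fix n assume n: "n \<in> {n::nat. a < real n \<and> real n \<le> b \<and> n mod 36 = r}"
    have "n mod 36 = r" using n by simp
    then have nq: "n = 36 * (n div 36) + r" by (metis div_mult_mod_eq mult.commute)
    have "real n = 36 * real (n div 36) + real r"
      using \<open>n = 36 * (n div 36) + r\<close> by (metis of_nat_add of_nat_mult of_nat_numeral)
    moreover have "a < real n" "real n \<le> b" using n by auto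
    ultimately have "?c < real (n div 36)" "real (n div 36) \<le> ?d"
      by (simp_all add: field_simps)
    with nq show "n \<in> (\<lambda>k. 36*k + r) ` {k::nat. ?c < real k \<and> real k \<le> ?d}" by blast
  next
    fix n assume "n \<in> (\<lambda>k. 36*k + r) ` {k::nat. ?c < real k \<and> real k \<le> ?d}"
    then obtain k where k: "n = 36*k + r" "?c < real k" "real k \<le> ?d" by auto
    then show "n \<in> {n::nat. a < real n \<and> real n \<le> b \<and> n mod 36 = r}"
      using assms(3) by (auto simp: field_simps)
  qed
  moreover have "inj (\<lambda>k::nat. 36*k + r)" by (auto simp: inj_on_def)
  ultimately have eq: "card {n::nat. a < real n \<and> real n \<le> b \<and> n mod 36 = r} =
     card {k::nat. ?c < real k \<and> real k \<le> ?d}"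
    by (simp add: card_image inj_on_subset)
  have "-1 < ?c" "?c \<le> ?d" using assms by auto
  from card_nat_interval[OF this] show ?thesis unfolding eq by (simp add: field_simps abs_le_iff)
qed



definition cnt :: "nat set \<Rightarrow> nat \<Rightarrow> real \<Rightarrow> real \<Rightarrow> nat" where
 "cnt P r a b = card {n::nat. a < real n \<and> real n \<le> b \<and> n mod 36 = r \<and> (\<forall>p\<in>P. \<not> p^2 dvd n)}"

lemma prime_coprime36: assumes "prime (q::nat)" "q \<ge> 5" shows "coprime q 36"
proof -
  have "\<not> q dvd 36"
  proof
    assume "q dvd 36"
    then have "q dvd 2*2*(3*3)" by simp
    then have "q dvd 2 \<or> q dvd 3" using assms(1) by (metis prime_dvd_mult_iff)
    then have "q \<le> 3" by (auto dest: dvd_imp_le)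
    then show False using assms by simp
  qed
  then show ?thesis using assms(1) by (simp add: prime_imp_coprime)
qed

lemma inv_class:
  fixes q s m r :: nat
  assumes h1: "cong (q * s) (1) 36" and r: "r < 36"
  shows "(q*m) mod 36 = r \<longleftrightarrow> m mod 36 = (r * s) mod 36"
proof
  assume "(q*m) mod 36 = r"
  then have "cong (q*m) (r) 36" using r by (simp add: cong_def)
  then have a: "cong (s*(q*m)) (s*r) 36" by (rule cong_scalar_left)
  have "cong ((q * s)*m) (1*m) 36" using h1 by (rule cong_scalar_right)
  then have "cong (s*(q*m)) (m) 36" by (simp add: ac_simps)
  then have "cong (m) (s*r) 36" using a by (meson cong_sym cong_trans)
  then show "m mod 36 = (r * s) mod 36" by (simp add: cong_def ac_simps)
next
  assume "m mod 36 = (r * s) mod 36"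
  then have "cong (m) (r * s) 36" by (simp add: cong_def)
  then have a: "cong (q*m) (q*(r * s)) 36" by (rule cong_scalar_left)
  have "cong ((q * s)*r) (1*r) 36" using h1 by (rule cong_scalar_right)
  then have "cong (q*(r * s)) (r) 36" by (simp add: ac_simps)
  then have "cong (q*m) (r) 36" using a by (meson cong_trans)
  then show "(q*m) mod 36 = r" using r by (simp add: cong_def)
qed

lemma cnt_bound:
  assumes "finite P"
  shows "(\<forall>p\<in>P. prime p \<and> p \<ge> 5) \<Longrightarrow> r < 36 \<Longrightarrow> 0 \<le> a \<Longrightarrow> a \<le> b \<Longrightarrow>
    \<bar>real (cnt P r a b) - (b - a)/36 * (\<Prod>p\<in>P. 1 - 1/(real p)^2)\<bar> \<le> 2 ^ card P"
  using assms
proof (induction P arbitrary: r a b rule: finite_induct)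
  case empty
  then show ?case using card_class[of a b r] by (simp add: cnt_def)
next
  case (insert q F)
  have q: "prime q" "q \<ge> 5" using insert.prems by auto
  have Fp: "\<forall>p\<in>F. prime p \<and> p \<ge> 5" using insert.prems by auto
  have qpos: "q > 0" using q by (simp add: prime_gt_0_nat)
  define S where "S = {n::nat. a < real n \<and> real n \<le> b \<and> n mod 36 = r \<and> (\<forall>p\<in>F. \<not> p^2 dvd n)}"
  define T where "T = {n \<in> S. q^2 dvd n}"
  have finS: "finite S" unfolding S_def using finite_le_real[of b "\<lambda>n. a < real n \<and> n mod 36 = r \<and> (\<forall>p\<in>F. \<not> p^2 dvd n)"]
    by (simp add: conj_commute conj_left_commute)
  have TS: "T \<subseteq> S" unfolding T_def by auto
  have eqI: "{n::nat. a < real n \<and> real n \<le> b \<and> n mod 36 = r \<and> (\<forall>p\<in>insert q F. \<not> p^2 dvd n)} = S - T"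
    unfolding S_def T_def by auto
  have cS: "cnt F r a b = card S" unfolding cnt_def S_def ..
  have cI: "cnt (insert q F) r a b = card S - card T"
    unfolding cnt_def eqI using finS TS by (simp add: card_Diff_subset finite_subset)
  have cTle: "card T \<le> card S" using finS TS by (simp add: card_mono)
  have "coprime (q^2) 36" using prime_coprime36[OF q] by simp
  then obtain s where s: "cong (q^2 * s) (Suc 0) 36" using cong_solve_coprime_nat by blast
  define r' where "r' = (r * s) mod 36"
  define S' where "S' = {m::nat. a/q^2 < real m \<and> real m \<le> b/q^2 \<and> m mod 36 = r' \<and> (\<forall>p\<in>F. \<not> p^2 dvd m)}"
  have q2: "real q ^ 2 > 0" using qpos by simp
  have pdv: "p^2 dvd q^2 * m \<longleftrightarrow> p^2 dvd m" if "p \<in> F" for p m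
  proof -
    have "p \<noteq> q" using that insert.hyps by auto
    then have "coprime p q" using Fp that q primes_coprime by blast
    then have "coprime (p^2) (q^2)" by simp
    then show ?thesis by (rule coprime_dvd_mult_right_iff)
  qed
  have cls: "(q^2 * m) mod 36 = r \<longleftrightarrow> m mod 36 = r'" for m
    unfolding r'_def using inv_class[of "q^2" s r m] s insert.prems by simp
  have intv: "a < real (q^2*m) \<longleftrightarrow> a/q^2 < real m" "real (q^2*m) \<le> b \<longleftrightarrow> real m \<le> b/q^2" for m
    using q2 by (simp_all add: field_simps)
  have TS': "T = (\<lambda>m. q^2 * m) ` S'"
  proof (intro set_eqI iffI)
    fix n assume n: "n \<in> T"
    then obtain m where m: "n = q^2 * m" unfolding T_def by (auto elim: dvdE)
    have "m \<in> S'" using n pdv cls intv unfolding T_def S_def S'_def m by auto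
    then show "n \<in> (\<lambda>m. q^2 * m) ` S'" using m by blast
  next
    fix n assume "n \<in> (\<lambda>m. q^2 * m) ` S'"
    then obtain m where m: "n = q^2 * m" "m \<in> S'" by auto
    then show "n \<in> T" using pdv cls intv unfolding T_def S_def S'_def by auto
  qed
  have "inj_on (\<lambda>m. q^2 * m) S'" using qpos by (auto simp: inj_on_def)
  then have cT: "card T = cnt F r' (a/q^2) (b/q^2)" unfolding TS' cnt_def S'_def by (simp add: card_image)
  define X where "X = (b - a)/36 * (\<Prod>p\<in>F. 1 - 1/(real p)^2)"
  have IH1: "\<bar>real (card S) - X\<bar> \<le> 2 ^ card F"
    using insert.IH[OF Fp insert.prems(2-4)] cS X_def by simp
  have r'l: "r' < 36" unfolding r'_def by simp
  have "0 \<le> a/q^2" "a/q^2 \<le> b/q^2" using insert.prems q2 by (auto intro: divide_right_mono)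
  from insert.IH[OF Fp r'l this] have IH2': "\<bar>real (card T) - (b/q^2 - a/q^2)/36 * (\<Prod>p\<in>F. 1 - 1/(real p)^2)\<bar> \<le> 2 ^ card F"
    unfolding cT by simp
  have e: "(b/q^2 - a/q^2)/36 * (\<Prod>p\<in>F. 1 - 1/(real p)^2) = X / (real q)^2"
    unfolding X_def using q2 by (simp add: field_simps)
  have IH2: "\<bar>real (card T) - X / (real q)^2\<bar> \<le> 2 ^ card F" using IH2' unfolding e .
  have pe: "(b - a)/36 * (\<Prod>p\<in>insert q F. 1 - 1/(real p)^2) = X - X/(real q)^2"
    using insert.hyps unfolding X_def using q2 by (simp add: field_simps)
  have "real (cnt (insert q F) r a b) = real (card S) - real (card T)" using cI cTle by simp
  then show ?case unfolding pe using IH1 IH2 insert.hyps by (simp add: abs_le_iff)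
qed



definition TP :: "nat set \<Rightarrow> nat \<Rightarrow> real" where
  "TP P K = (\<Sum>n\<in>{n\<in>{1..K}. \<forall>p\<in>P. \<not> p dvd n}. 1 / (real n)^2)"

lemma TP_empty_lim: "(\<lambda>K. TP {} K) \<longlonglongrightarrow> pi^2/6"
proof -
  have "(\<lambda>K. \<Sum>n<K. 1 / (1 + real n)^2) \<longlonglongrightarrow> pi^2/6"
    using inverse_squares_sums by (simp add: sums_def)
  moreover have "(\<Sum>n<K. 1 / (1 + real n)^2) = TP {} K" for K
  proof -
    have "(\<Sum>n<K. 1 / (1 + real n)^2) = (\<Sum>n<K. (\<lambda>m. 1 / (real m)^2) (Suc n))" by simp
    also have "\<dots> = (\<Sum>n=1..K. 1 / (real n)^2)" by (rule sum_bounds_lt_plus1)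
    moreover have "{n\<in>{1..K}. \<forall>p\<in>{}. \<not> p dvd n} = {1..K}" by auto
    ultimately show ?thesis unfolding TP_def by simp
  qed
  ultimately show ?thesis by simp
qed

lemma div_at_top: assumes "(q::nat) > 0" shows "filterlim (\<lambda>K. K div q) at_top sequentially"
  unfolding filterlim_at_top
proof
  fix Z :: nat
  show "eventually (\<lambda>K. Z \<le> K div q) sequentially"
  proof (rule eventually_sequentiallyI[of "Z*q"])
    fix K assume "Z*q \<le> K"
    then have "Z*q div q \<le> K div q" by (rule div_le_mono)
    then show "Z \<le> K div q" using assms by simp
  qed
qed

lemma TP_step:
  assumes "prime q" "q \<notin> F" "\<forall>p\<in>F. prime p"
  shows "TP (insert q F) K = TP F K - TP F (K div q) / (real q)^2"
proof -
  define AF where "AF K = {n\<in>{1..K}. \<forall>p\<in>F. \<not> p dvd n}" for K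
  define B where "B = {n \<in> AF K. q dvd n}"
  have qpos: "q > 0" using assms(1) prime_gt_0_nat by blast
  have fin: "finite (AF K)" unfolding AF_def by simp
  have BA: "B \<subseteq> AF K" unfolding B_def by auto
  have eqI: "{n\<in>{1..K}. \<forall>p\<in>insert q F. \<not> p dvd n} = AF K - B" unfolding AF_def B_def by auto
  have ndv: "p dvd q * m \<longleftrightarrow> p dvd m" if "p \<in> F" for p m
  proof -
    have "prime p" "p \<noteq> q" using assms that by auto
    then have "\<not> p dvd q" using assms(1) primes_dvd_imp_eq by blast
    then show ?thesis using \<open>prime p\<close> by (simp add: prime_dvd_mult_iff)
  qed
  have Bim: "B = (\<lambda>m. q * m) ` AF (K div q)"
  proof (intro set_eqI iffI)
    fix n assume n: "n \<in> B"
    then obtain m where m: "n = q * m" unfolding B_def by (auto elim: dvdE)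
    have "m \<le> K div q" using n m qpos unfolding B_def AF_def
      by (metis (no_types, lifting) atLeastAtMost_iff div_le_mono mem_Collect_eq nonzero_mult_div_cancel_left not_gr_zero)
    moreover have "1 \<le> m" using n m unfolding B_def AF_def by (cases m) auto
    ultimately have "m \<in> AF (K div q)" using n m ndv unfolding B_def AF_def by auto
    then show "n \<in> (\<lambda>m. q * m) ` AF (K div q)" using m by blast
  next
    fix n assume "n \<in> (\<lambda>m. q * m) ` AF (K div q)"
    then obtain m where m: "n = q * m" "m \<in> AF (K div q)" by auto
    have "q * m \<le> q * (K div q)" using m(2) unfolding AF_def by simp
    also have "\<dots> \<le> K" by simp
    finally have "q * m \<le> K" .
    moreover have "1 \<le> q * m" using m(2) qpos unfolding AF_def by simp
    ultimately show "n \<in> B" using m ndv unfolding B_def AF_def by auto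
  qed
  have "sum (\<lambda>n. 1 / (real n)^2) B = sum ((\<lambda>n. 1 / (real n)^2) \<circ> (\<lambda>m. q * m)) (AF (K div q))"
    unfolding Bim using qpos by (intro sum.reindex) (auto simp: inj_on_def)
  also have "\<dots> = sum (\<lambda>m. 1 / (real m)^2) (AF (K div q)) / (real q)^2"
    by (simp add: sum_divide_distrib power_mult_distrib field_simps)
  finally have sB: "sum (\<lambda>n. 1 / (real n)^2) B = TP F (K div q) / (real q)^2"
    unfolding TP_def AF_def .
  have "TP F K = sum (\<lambda>n. 1 / (real n)^2) (AF K - B) + sum (\<lambda>n. 1 / (real n)^2) B"
    unfolding TP_def AF_def[symmetric] by (rule sum.subset_diff[OF BA fin])
  then show ?thesis unfolding TP_def eqI[symmetric] using sB unfolding TP_def by simp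
qed

lemma TP_lim:
  assumes "finite P"
  shows "(\<forall>p\<in>P. prime p) \<Longrightarrow> (\<lambda>K. TP P K) \<longlonglongrightarrow> (\<Prod>p\<in>P. 1 - 1/(real p)^2) * (pi^2/6)"
  using assms
proof (induction P rule: finite_induct)
  case empty
  then show ?case using TP_empty_lim by simp
next
  case (insert q F)
  have q: "prime q" and Fp: "\<forall>p\<in>F. prime p" using insert.prems by auto
  let ?L = "(\<Prod>p\<in>F. 1 - 1/(real p)^2) * (pi^2/6)"
  have l1: "(\<lambda>K. TP F K) \<longlonglongrightarrow> ?L" using insert.IH Fp by simp
  have l2: "(\<lambda>K. TP F (K div q)) \<longlonglongrightarrow> ?L"
    using filterlim_compose[OF l1 div_at_top[of q]] q prime_gt_0_nat by (simp add: o_def)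
  have lim: "(\<lambda>K. TP F K - TP F (K div q) / (real q)^2) \<longlonglongrightarrow> ?L - ?L / (real q)^2"
    by (intro tendsto_diff tendsto_divide l1 l2 tendsto_const) (use prime_gt_0_nat[OF q] in simp)
  have eq: "?L - ?L / (real q)^2 = (\<Prod>p\<in>insert q F. 1 - 1/(real p)^2) * (pi^2/6)"
    using insert.hyps q prime_gt_0_nat[OF q] by (simp add: field_simps)
  have ev: "(\<lambda>K. TP (insert q F) K) = (\<lambda>K. TP F K - TP F (K div q) / (real q)^2)"
    by (rule ext) (rule TP_step[OF q insert.hyps(2) Fp])
  show ?case unfolding ev using lim unfolding eq .
qed

lemma euler_lb:
  assumes "finite P" "\<forall>p\<in>P. prime p"
  shows "(\<Prod>p\<in>P. 1 - 1/(real p)^2) \<ge> 6 / pi^2"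
proof -
  have "1 \<le> TP P K" if "K \<ge> 1" for K
  proof -
    have "1 \<in> {n\<in>{1..K}. \<forall>p\<in>P. \<not> p dvd n}" using that assms(2) by auto
    then have "1 / (real 1)^2 \<le> TP P K" unfolding TP_def
      by (intro member_le_sum) auto
    then show ?thesis by simp
  qed
  then have "1 \<le> (\<Prod>p\<in>P. 1 - 1/(real p)^2) * (pi^2/6)"
    using LIMSEQ_le_const[OF TP_lim[OF assms(1) assms(2)]] by blast
  moreover have "pi^2 > 0" by simp
  ultimately show ?thesis by (simp add: field_simps)
qed

lemma euler_lb5:
  assumes "finite P" "\<forall>p\<in>P. prime p \<and> p \<ge> 5"
  shows "(\<Prod>p\<in>P. 1 - 1/(real p)^2) \<ge> 9 / pi^2"
proof -
  have "2 \<notin> P" "3 \<notin> P" using assms(2) by auto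
  have "6 / pi^2 \<le> (\<Prod>p\<in>insert 2 (insert 3 P). 1 - 1/(real p)^2)"
    using assms by (intro euler_lb) auto
  also have "\<dots> = (2/3) * (\<Prod>p\<in>P. 1 - 1/(real p)^2)"
    using assms(1) \<open>2 \<notin> P\<close> \<open>3 \<notin> P\<close> by simp
  finally show ?thesis by (simp add: field_simps)
qed



lemma tele: assumes "(y::nat) \<ge> 1" "y \<le> K"
  shows "(\<Sum>k\<in>{y<..K}. 1 / (real k)^2) \<le> 1 / real y - 1 / real K"
  using assms(2)
proof (induction K rule: dec_induct)
  case base
  then show ?case by simp
next
  case (step K)
  have K1: "real K \<ge> 1" using step.hyps assms(1) by simp
  have "{y<..Suc K} = insert (Suc K) {y<..K}" using step.hyps by auto
  then have "(\<Sum>k\<in>{y<..Suc K}. 1 / (real k)^2) = 1 / (real (Suc K))^2 + (\<Sum>k\<in>{y<..K}. 1 / (real k)^2)"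
    by simp
  moreover have "1 / (real (Suc K))^2 \<le> 1 / real K - 1 / real (Suc K)"
  proof -
    have e: "1 / real K - 1 / real (Suc K) = 1 / (real K * real (Suc K))" using K1 by (simp add: field_simps)
    have "real K * real (Suc K) \<le> (real (Suc K))^2" by (simp add: power2_eq_square)
    then have "1 / (real (Suc K))^2 \<le> 1 / (real K * real (Suc K))"
      using K1 by (intro divide_left_mono) auto
    then show ?thesis unfolding e .
  qed
  ultimately show ?case using step.IH by simp
qed

lemma tele2: assumes "(y::nat) \<ge> 1"
  shows "(\<Sum>k\<in>{y<..K}. 1 / (real k)^2) \<le> 1 / real y"
proof (cases "y \<le> K")
  case True
  have "0 \<le> 1 / real K" by simp
  then show ?thesis using tele[OF assms True] by linarith
next
  case False
  then have "{y<..K} = {}" by auto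
  then show ?thesis by simp
qed

lemma card_mult_interval:
  fixes k b N :: nat
  assumes "k \<ge> 1"
  shows "real (card {n. b < n \<and> n \<le> b + N \<and> k^2 dvd n}) \<le> real N / (real k)^2 + 1"
proof -
  have kp: "(real k)^2 > 0" using assms by simp
  have "{n. b < n \<and> n \<le> b + N \<and> k^2 dvd n} = (\<lambda>m. k^2 * m) ` {m::nat. real b / (real k)^2 < real m \<and> real m \<le> real (b+N) / (real k)^2}"
  proof (intro set_eqI iffI)
    fix n assume n: "n \<in> {n. b < n \<and> n \<le> b + N \<and> k^2 dvd n}"
    then obtain m where m: "n = k^2 * m" by (auto elim: dvdE)
    have "real b < real (k^2) * real m" "real (k^2) * real m \<le> real (b+N)"
      using n m by (simp_all only: of_nat_mult[symmetric] of_nat_less_iff of_nat_le_iff) auto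
    then have "real b / (real k)^2 < real m \<and> real m \<le> real (b+N) / (real k)^2"
      using kp by (simp add: field_simps)
    then show "n \<in> (\<lambda>m. k^2 * m) ` {m::nat. real b / (real k)^2 < real m \<and> real m \<le> real (b+N) / (real k)^2}"
      using m by blast
  next
    fix n assume "n \<in> (\<lambda>m. k^2 * m) ` {m::nat. real b / (real k)^2 < real m \<and> real m \<le> real (b+N) / (real k)^2}"
    then obtain m where m: "n = k^2 * m" "real b / (real k)^2 < real m" "real m \<le> real (b+N) / (real k)^2" by auto
    then have "real b < real (k^2) * real m" "real (k^2) * real m \<le> real (b+N)"
      using kp by (simp_all add: field_simps)
    then have "b < k^2 * m" "k^2 * m \<le> b + N"
      by (simp_all only: of_nat_mult[symmetric] of_nat_less_iff of_nat_le_iff)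
    then show "n \<in> {n. b < n \<and> n \<le> b + N \<and> k^2 dvd n}" using m by auto
  qed
  moreover have "inj (\<lambda>m::nat. k^2 * m)" using assms by (auto simp: inj_on_def)
  ultimately have eq: "card {n. b < n \<and> n \<le> b + N \<and> k^2 dvd n} =
     card {m::nat. real b / (real k)^2 < real m \<and> real m \<le> real (b+N) / (real k)^2}"
    by (simp add: card_image inj_on_subset)
  have "0 \<le> real b / (real k)^2" using kp by simp
  then have "-1 < real b / (real k)^2" by linarith
  moreover have "real b / (real k)^2 \<le> real (b+N) / (real k)^2" using kp by (simp add: divide_right_mono)
  ultimately have "real (card {m::nat. real b / (real k)^2 < real m \<and> real m \<le> real (b+N) / (real k)^2})
     \<le> real (b+N) / (real k)^2 - real b / (real k)^2 + 1" by (rule card_nat_interval(1))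
  also have "\<dots> = real N / (real k)^2 + 1" by (simp add: add_divide_distrib)
  finally show ?thesis unfolding eq .
qed

lemma dvd36_mod: "(d::nat) dvd 36 \<Longrightarrow> d dvd n \<longleftrightarrow> d dvd (n mod 36)"
  by (simp add: dvd_mod_iff)

lemma ns_bound:
  fixes y N b r :: nat
  assumes y1: "y \<ge> 1" and r: "r < 36" "\<not> 4 dvd r" "\<not> 9 dvd r" and bN: "b \<le> N"
  shows "real (card {n. b < n \<and> n \<le> b + N \<and> n mod 36 = r \<and> \<not> squarefree n})
     \<le> real N / 36 * (1 - 9 / pi^2) + real N / real y + 1 + 2 ^ card {p. prime p \<and> 5 \<le> p \<and> p \<le> y} + sqrt (2 * real N)"
proof -
  define P where "P = {p. prime p \<and> 5 \<le> p \<and> p \<le> y}"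
  have finP: "finite P" unfolding P_def by simp
  have Pp: "\<forall>p\<in>P. prime p \<and> p \<ge> 5" unfolding P_def by simp
  define NS where "NS = {n. b < n \<and> n \<le> b + N \<and> n mod 36 = r \<and> \<not> squarefree n}"
  define C0 where "C0 = {n::nat. real b < real n \<and> real n \<le> real (b+N) \<and> n mod 36 = r \<and> (\<forall>p\<in>{}. \<not> p^2 dvd n)}"
  define SP where "SP = {n::nat. real b < real n \<and> real n \<le> real (b+N) \<and> n mod 36 = r \<and> (\<forall>p\<in>P. \<not> p^2 dvd n)}"
  define K where "K = nat \<lfloor>sqrt (real (b+N))\<rfloor>"
  define M where "M k = {n. b < n \<and> n \<le> b + N \<and> k^2 dvd n}" for k :: nat
  have finC0: "finite C0" unfolding C0_def
    using finite_le_real[of "real (b+N)" "\<lambda>n. real b < real n \<and> n mod 36 = r"] by (simp add: conj_commute conj_left_commute)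
  have SPC0: "SP \<subseteq> C0" unfolding SP_def C0_def by auto
  have finM: "finite (M k)" for k unfolding M_def by (rule finite_subset[of _ "{..b+N}"]) auto
  have sub: "NS \<subseteq> (C0 - SP) \<union> (\<Union>k\<in>{y<..K}. M k)"
  proof
    fix n assume n: "n \<in> NS"
    then have n0: "n \<noteq> 0" and nb: "b < n" "n \<le> b + N" and nr: "n mod 36 = r" and nsq: "\<not> squarefree n"
      unfolding NS_def by auto
    then obtain p where p: "prime p" "p^2 dvd n" using squarefree_factorial_semiring[OF n0] by blast
    have "p \<noteq> 2"
    proof
      assume "p = 2" then have "4 dvd n" using p by simp
      then have "4 dvd r" using dvd36_mod[of 4 n] nr by simp
      then show False using r by simp
    qed
    moreover have "p \<noteq> 3"
    proof
      assume "p = 3" then have "9 dvd n" using p by simp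
      then have "9 dvd r" using dvd36_mod[of 9 n] nr by simp
      then show False using r by simp
    qed
    moreover have "p \<ge> 2" using p prime_ge_2_nat by blast
    moreover have "p \<noteq> 4"
    proof
      assume "p = 4" then have "prime ((2::nat) * 2)" using p by simp
      then show False using prime_product[of "2::nat" 2] by simp
    qed
    ultimately have p5: "p \<ge> 5" by linarith
    show "n \<in> (C0 - SP) \<union> (\<Union>k\<in>{y<..K}. M k)"
    proof (cases "p \<le> y")
      case True
      then have "p \<in> P" unfolding P_def using p p5 by simp
      then have "n \<notin> SP" unfolding SP_def using p by auto
      moreover have "n \<in> C0" unfolding C0_def using nb nr by simp
      ultimately show ?thesis by simp
    next
      case False
      have "p^2 \<le> n" using p n0 by (simp add: dvd_imp_le)
      then have "p^2 \<le> b + N" using nb by simp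
      then have "real (p^2) \<le> real (b+N)" by (simp only: of_nat_le_iff)
      then have "real p ^ 2 \<le> real (b+N)" by simp
      then have "real p \<le> sqrt (real (b+N))" by (rule real_le_rsqrt)
      then have "int p \<le> \<lfloor>sqrt (real (b+N))\<rfloor>" by (metis le_floor_iff of_int_of_nat_eq)
      then have "p \<le> K" unfolding K_def by simp
      then have "p \<in> {y<..K}" using False by simp
      moreover have "n \<in> M p" unfolding M_def using nb p by simp
      ultimately show ?thesis by blast
    qed
  qed
  have "card NS \<le> card ((C0 - SP) \<union> (\<Union>k\<in>{y<..K}. M k))"
    by (rule card_mono[OF _ sub]) (use finC0 finM in auto)
  also have "\<dots> \<le> card (C0 - SP) + card (\<Union>k\<in>{y<..K}. M k)" by (rule card_Un_le)
  also have "card (\<Union>k\<in>{y<..K}. M k) \<le> (\<Sum>k\<in>{y<..K}. card (M k))" by (rule card_UN_le) simp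
  finally have "card NS \<le> card (C0 - SP) + (\<Sum>k\<in>{y<..K}. card (M k))" by simp
  then have "real (card NS) \<le> real (card (C0 - SP) + (\<Sum>k\<in>{y<..K}. card (M k)))"
    by (simp only: of_nat_le_iff)
  then have c1: "real (card NS) \<le> real (card (C0 - SP)) + (\<Sum>k\<in>{y<..K}. real (card (M k)))"
    by simp
  have "card (C0 - SP) = card C0 - card SP" using SPC0 finC0 by (simp add: card_Diff_subset finite_subset)
  moreover have "card SP \<le> card C0" using SPC0 finC0 by (simp add: card_mono)
  ultimately have c2: "real (card (C0 - SP)) = real (card C0) - real (card SP)" by simp
  have bb: "0 \<le> real b" "real b \<le> real (b+N)" by auto
  have "\<bar>real (cnt {} r (real b) (real (b+N))) - (real (b+N) - real b)/36 * 1\<bar> \<le> 1"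
    using cnt_bound[of "{}" r "real b" "real (b+N)"] r bb by simp
  then have c3: "real (card C0) \<le> real N / 36 + 1" unfolding cnt_def C0_def by (simp add: abs_le_iff)
  have "\<bar>real (cnt P r (real b) (real (b+N))) - (real (b+N) - real b)/36 * (\<Prod>p\<in>P. 1 - 1/(real p)^2)\<bar> \<le> 2 ^ card P"
    using cnt_bound[OF finP Pp r(1) bb] .
  then have "real (card SP) \<ge> real N / 36 * (\<Prod>p\<in>P. 1 - 1/(real p)^2) - 2 ^ card P"
    unfolding cnt_def SP_def by (simp add: abs_le_iff)
  moreover have "real N / 36 * (\<Prod>p\<in>P. 1 - 1/(real p)^2) \<ge> real N / 36 * (9 / pi^2)"
    using euler_lb5[OF finP Pp] by (intro mult_left_mono) auto
  ultimately have c4: "real (card SP) \<ge> real N / 36 * (9 / pi^2) - 2 ^ card P" by linarith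
  have "(\<Sum>k\<in>{y<..K}. real (card (M k))) \<le> (\<Sum>k\<in>{y<..K}. real N / (real k)^2 + 1)"
    using card_mult_interval y1 unfolding M_def by (intro sum_mono) auto
  also have "\<dots> = real N * (\<Sum>k\<in>{y<..K}. 1 / (real k)^2) + real (K - y)"
    by (simp add: sum.distrib sum_distrib_left)
  also have "\<dots> \<le> real N * (1 / real y) + real K"
    using tele2[OF y1, of K] by (intro add_mono mult_left_mono) auto
  also have "real K \<le> sqrt (2 * real N)"
  proof -
    have "real K \<le> sqrt (real (b+N))" unfolding K_def by simp
    also have "\<dots> \<le> sqrt (2 * real N)" using bN by simp
    finally show ?thesis .
  qed
  finally have c5: "(\<Sum>k\<in>{y<..K}. real (card (M k))) \<le> real N / real y + sqrt (2 * real N)" by simp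
  have e: "real N / 36 * (1 - 9 / pi^2) = real N / 36 - real N / 36 * (9 / pi^2)" by (simp add: right_diff_distrib)
  show ?thesis unfolding NS_def[symmetric] P_def[symmetric] e
    using c1 c2 c3 c4 c5 by linarith
qed



lemma ev_bound: fixes e C :: real assumes "e > 0"
  shows "eventually (\<lambda>t. C + sqrt (2*t) < e*t/5400) at_top"
  using assms by real_asymp

definition Qc :: "nat \<Rightarrow> bool" where "Qc t = (t mod 4 = 0 \<or> t mod 9 = 0)"
definition okr :: "nat \<Rightarrow> nat \<Rightarrow> bool" where
 "okr v a = (even v \<and> (v mod 4 = 2 \<longleftrightarrow> v mod 9 = a) \<and> (v mod 4 = 0 \<longleftrightarrow> v mod 9 = 9 - a))"
definition chk :: bool where "chk = list_all (\<lambda>u1. list_all (\<lambda>u2.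
  u1 = u2 \<or> \<not> Qc (u1+u1) \<or> \<not> Qc (u1+u2) \<or> \<not> Qc (u2+u2) \<or>
  (let W = filter (\<lambda>v. Qc (u1+v) \<and> Qc (u2+v)) [0..<36] in
   list_all (\<lambda>v. v mod 4 = 0) W \<or> list_all (\<lambda>v. v mod 9 = 0) W \<or> list_all (\<lambda>v. v mod 4 = 2) W \<or>
   list_ex (\<lambda>a. list_all (\<lambda>v. okr v a) W) [1..<9])) [0..<36]) [0..<36]"

lemma chk_true: chk by code_simp

lemma comb:
  assumes "u1 < 36" "u2 < 36" "u1 \<noteq> u2" "Qc (u1+u1)" "Qc (u1+u2)" "Qc (u2+u2)"
  shows "(\<forall>v<36. Qc (u1+v) \<and> Qc (u2+v) \<longrightarrow> v mod 4 = 0) \<or>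
         (\<forall>v<36. Qc (u1+v) \<and> Qc (u2+v) \<longrightarrow> v mod 9 = 0) \<or>
         (\<forall>v<36. Qc (u1+v) \<and> Qc (u2+v) \<longrightarrow> v mod 4 = 2) \<or>
         (\<exists>a\<in>{1..8}. \<forall>v<36. Qc (u1+v) \<and> Qc (u2+v) \<longrightarrow> okr v a)"
proof -
  have "\<forall>u1\<in>set [0..<36]. \<forall>u2\<in>set [0..<36]. u1 = u2 \<or> \<not> Qc (u1+u1) \<or> \<not> Qc (u1+u2) \<or> \<not> Qc (u2+u2) \<or>
   ((\<forall>v\<in>set (filter (\<lambda>v. Qc (u1+v) \<and> Qc (u2+v)) [0..<36]). v mod 4 = 0) \<or>
    (\<forall>v\<in>set (filter (\<lambda>v. Qc (u1+v) \<and> Qc (u2+v)) [0..<36]). v mod 9 = 0) \<or>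
    (\<forall>v\<in>set (filter (\<lambda>v. Qc (u1+v) \<and> Qc (u2+v)) [0..<36]). v mod 4 = 2) \<or>
    (\<exists>a\<in>set [1..<9]. \<forall>v\<in>set (filter (\<lambda>v. Qc (u1+v) \<and> Qc (u2+v)) [0..<36]). okr v a))"
    using chk_true unfolding chk_def by (simp only: list_all_iff list_ex_iff Let_def)
  then have "u1 = u2 \<or> \<not> Qc (u1+u1) \<or> \<not> Qc (u1+u2) \<or> \<not> Qc (u2+u2) \<or>
   ((\<forall>v\<in>set (filter (\<lambda>v. Qc (u1+v) \<and> Qc (u2+v)) [0..<36]). v mod 4 = 0) \<or>
    (\<forall>v\<in>set (filter (\<lambda>v. Qc (u1+v) \<and> Qc (u2+v)) [0..<36]). v mod 9 = 0) \<or>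
    (\<forall>v\<in>set (filter (\<lambda>v. Qc (u1+v) \<and> Qc (u2+v)) [0..<36]). v mod 4 = 2) \<or>
    (\<exists>a\<in>set [1..<9]. \<forall>v\<in>set (filter (\<lambda>v. Qc (u1+v) \<and> Qc (u2+v)) [0..<36]). okr v a))"
    using assms(1,2) by simp
  moreover have e: "{Suc 0..<9} = {Suc 0..(8::nat)}" by auto
  ultimately show ?thesis using assms(3-6) by (simp add: Ball_def e) blast
qed



lemma m4: "(x::nat) mod 36 mod 4 = x mod 4" by (rule mod_mod_cancel) simp
lemma m9: "(x::nat) mod 36 mod 9 = x mod 9" by (rule mod_mod_cancel) simp

lemma Qc_mod: "Qc (u + b mod 36) \<longleftrightarrow> Qc (u + b)"
proof -
  have e: "(u + b mod 36) mod 36 = (u + b) mod 36" by (simp add: mod_add_right_eq)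
  have "(u + b mod 36) mod 4 = (u + b) mod 4" by (metis e m4)
  moreover have "(u + b mod 36) mod 9 = (u + b) mod 9" by (metis e m9)
  ultimately show ?thesis unfolding Qc_def by simp
qed

lemma two_elems: assumes "card (S::'a set) \<ge> 2" obtains u1 u2 where "u1 \<in> S" "u2 \<in> S" "u1 \<noteq> u2"
proof -
  have fin: "finite S" using assms card.infinite by fastforce
  have "S \<noteq> {}" using assms by auto
  then obtain u1 where u1: "u1 \<in> S" by blast
  have "card (S - {u1}) \<ge> 1" using assms u1 fin by simp
  then have "S - {u1} \<noteq> {}" by (metis card.empty not_one_le_zero)
  then obtain u2 where "u2 \<in> S - {u1}" by blast
  then show ?thesis using that u1 by auto
qed

lemma lin_aux: "(a::real) \<le> b \<Longrightarrow> L = X + E \<Longrightarrow> E1 + E2 = E \<Longrightarrow> L < a \<Longrightarrow>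
   b \<le> X + Y + c + d + s \<Longrightarrow> Y \<le> E1 \<Longrightarrow> c + d + s < E2 \<Longrightarrow> False" by linarith

lemma key:
  fixes \<epsilon> x :: real and A :: "nat set" and u b y N :: nat
  assumes e: "\<epsilon> > 0" and y1: "y \<ge> 1" and yb: "real N / real y \<le> \<epsilon> * real N / 10800"
    and NB: "1 + 2 ^ card {p. prime p \<and> 5 \<le> p \<and> p \<le> y} + sqrt (2 * real N) < \<epsilon> * real N / 5400"
    and N: "N = nat \<lfloor>x\<rfloor>" and xpos: "x > 0"
    and Asub: "A \<subseteq> {n. 1 \<le> n \<and> real n \<le> x}"
    and sq: "\<forall>m \<in> sumset A. \<not> squarefree m"
    and u: "u \<in> U_set \<epsilon> A x" and b: "b \<in> A"
  shows "Qc (u + b mod 36)"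
proof (rule ccontr)
  assume nq: "\<not> Qc (u + b mod 36)"
  define r where "r = (u + b) mod 36"
  have r36: "r < 36" unfolding r_def by simp
  have "\<not> Qc (u + b)" using nq Qc_mod by simp
  then have r4: "\<not> 4 dvd r" and r9: "\<not> 9 dvd r" unfolding Qc_def r_def
    by (simp_all add: m4 m9 dvd_eq_mod_eq_0)
  have leN: "n \<le> N" if "n \<in> A" for n
  proof -
    have "real n \<le> x" using that Asub by auto
    then have "int n \<le> \<lfloor>x\<rfloor>" by (metis le_floor_iff of_int_of_nat_eq)
    then show ?thesis unfolding N by simp
  qed
  have bN: "b \<le> N" using leN b .
  define Au where "Au = {n\<in>A. n mod 36 = u}"
  define NS where "NS = {n. b < n \<and> n \<le> b + N \<and> n mod 36 = r \<and> \<not> squarefree n}"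
  have finNS: "finite NS" unfolding NS_def by (rule finite_subset[of _ "{..b+N}"]) auto
  have "(\<lambda>n. n + b) ` Au \<subseteq> NS"
  proof
    fix m assume "m \<in> (\<lambda>n. n + b) ` Au"
    then obtain n where n: "m = n + b" "n \<in> A" "n mod 36 = u" unfolding Au_def by auto
    have "1 \<le> n" using n Asub by auto
    moreover have "n \<le> N" using leN n by simp
    moreover have "(n + b) mod 36 = r" unfolding r_def using n(3) by (metis mod_add_left_eq)
    moreover have "n + b \<in> sumset A" unfolding sumset_def using n b by blast
    ultimately show "m \<in> NS" unfolding NS_def using n sq by auto
  qed
  moreover have "inj_on (\<lambda>n. n + b) Au" by (auto simp: inj_on_def)
  ultimately have cle: "card Au \<le> card NS" using finNS by (metis card_image card_mono)
  have "res_density A x u > 1 - 9 / pi^2 + \<epsilon> / 100" using u unfolding U_set_def by simp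
  then have "36 * real (card Au) / x > 1 - 9 / pi^2 + \<epsilon> / 100" unfolding res_density_def Au_def .
  then have c1: "real (card Au) > (1 - 9 / pi^2 + \<epsilon> / 100) * x / 36" using xpos by (simp add: field_simps)
  have pi2: "9 / pi^2 < 1"
  proof -
    have "3 < pi" using pi_gt3 .
    then have "(3::real)^2 < pi^2" by (intro power_strict_mono) auto
    then have "9 < pi^2" by simp
    then show ?thesis by simp
  qed
  have coef: "1 - 9 / pi^2 + \<epsilon> / 100 > 0" using pi2 e by linarith
  have "real N \<le> x" unfolding N using xpos by simp
  then have "(1 - 9 / pi^2 + \<epsilon> / 100) * real N / 36 \<le> (1 - 9 / pi^2 + \<epsilon> / 100) * x / 36"
    using coef by (simp add: divide_right_mono mult_left_mono)
  with c1 have c2: "real (card Au) > (1 - 9 / pi^2 + \<epsilon> / 100) * real N / 36" by linarith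
  have c3: "real (card NS) \<le> real N / 36 * (1 - 9 / pi^2) + real N / real y + 1 + 2 ^ card {p. prime p \<and> 5 \<le> p \<and> p \<le> y} + sqrt (2 * real N)"
    unfolding NS_def using ns_bound[OF y1 r36 r4 r9 bN] .
  have "real (card Au) \<le> real (card NS)" using cle by simp
  moreover have "(1 - 9 / pi^2 + \<epsilon> / 100) * real N / 36 = real N / 36 * (1 - 9 / pi^2) + \<epsilon> * real N / 3600"
    by (simp add: field_simps)
  moreover have "\<epsilon> * real N / 10800 + \<epsilon> * real N / 5400 = \<epsilon> * real N / 3600" by simp
  ultimately show False using c2 c3 yb NB by (rule lin_aux)
qed

lemma pi2: "9 / pi^2 < 1"
proof -
  have "(3::real)^2 < pi^2" using pi_gt3 by (intro power_strict_mono) auto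
  then have "9 < pi^2" by simp
  then show ?thesis by simp
qed

lemma m2: "even ((x::nat) mod 36) \<longleftrightarrow> even x"
proof -
  have "(x::nat) mod 36 mod 2 = x mod 2" by (rule mod_mod_cancel) simp
  then show ?thesis by (simp add: even_iff_mod_2_eq_zero)
qed

theorem lemma2:
  fixes \<epsilon> :: real
  assumes "\<epsilon> > 0"
  shows "\<exists>X0. \<forall>x::real. x \<ge> X0 \<longrightarrow>
    (\<forall>A :: nat set.
       A \<subseteq> {n. 1 \<le> n \<and> real n \<le> x} \<longrightarrow>
       real (card A) > (delta0 + \<epsilon>) * x \<longrightarrow>
       (\<forall>m \<in> sumset A. \<not> squarefree m) \<longrightarrow>
       \<not> A \<subseteq> {n. 4 dvd n} \<longrightarrow>
       \<not> A \<subseteq> {n. 9 dvd n} \<longrightarrow>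
       \<not> A \<subseteq> {n. n mod 4 = 2} \<longrightarrow>
       card (U_set \<epsilon> A x) \<ge> 2 \<longrightarrow>
       (\<forall>n\<in>A. even n) \<and>
       (\<exists>a\<in>{1..8::nat}. \<forall>n\<in>A.
          (n mod 4 = 2 \<longleftrightarrow> n mod 9 = a) \<and>
          (n mod 4 = 0 \<longleftrightarrow> n mod 9 = 9 - a)))"
proof -
  have e: "\<epsilon> > 0" by fact
  define y where "y = nat \<lceil>10800 / \<epsilon>\<rceil> + 1"
  have y1: "y \<ge> 1" unfolding y_def by simp
  have ygt: "real y \<ge> 10800 / \<epsilon>" unfolding y_def
    using real_nat_ceiling_ge[of "10800 / \<epsilon>"] by simp
  have yb: "real N / real y \<le> \<epsilon> * real N / 10800" for N :: nat
  proof -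
    have "real N / real y \<le> real N / (10800 / \<epsilon>)"
    proof (rule divide_left_mono)
      show "0 < real y * (10800 / \<epsilon>)" using y1 e by simp
    qed (use ygt in auto)
    then show ?thesis by (simp add: field_simps)
  qed
  define Cst :: real where "Cst = 1 + 2 ^ card {p. prime p \<and> 5 \<le> p \<and> p \<le> y}"
  obtain T where T: "\<And>t. t \<ge> T \<Longrightarrow> Cst + sqrt (2*t) < \<epsilon>*t/5400"
    using ev_bound[OF e, of Cst] unfolding eventually_at_top_linorder by blast
  show ?thesis
  proof (intro exI[of _ "max T 0 + 2"] allI impI)
    fix x :: real and A :: "nat set"
    assume x: "max T 0 + 2 \<le> x"
      and Asub: "A \<subseteq> {n. 1 \<le> n \<and> real n \<le> x}"
      and "real (card A) > (delta0 + \<epsilon>) * x"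
      and sq: "\<forall>m \<in> sumset A. \<not> squarefree m"
      and n4: "\<not> A \<subseteq> {n. 4 dvd n}" and n9: "\<not> A \<subseteq> {n. 9 dvd n}" and n2: "\<not> A \<subseteq> {n. n mod 4 = 2}"
      and U2: "card (U_set \<epsilon> A x) \<ge> 2"
    define N where "N = nat \<lfloor>x\<rfloor>"
    have xpos: "x > 0" using x by simp
    have "\<lfloor>x\<rfloor> \<ge> 0" using xpos by simp
    then have "real N = of_int \<lfloor>x\<rfloor>" unfolding N_def by simp
    then have "real N \<ge> x - 1" using real_of_int_floor_gt_diff_one[of x] by linarith
    then have "real N \<ge> T" using x by simp
    then have NB: "1 + 2 ^ card {p. prime p \<and> 5 \<le> p \<and> p \<le> y} + sqrt (2 * real N) < \<epsilon> * real N / 5400"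
      using T unfolding Cst_def by simp
    have K: "Qc (u + b mod 36)" if "u \<in> U_set \<epsilon> A x" "b \<in> A" for u b
      by (rule key[OF e y1 yb NB N_def xpos Asub sq that])
    have ne: "\<exists>b\<in>A. b mod 36 = u \<and> u < 36" if u: "u \<in> U_set \<epsilon> A x" for u
    proof -
      have "res_density A x u > 1 - 9 / pi^2 + \<epsilon> / 100" "u < 36" using u unfolding U_set_def by auto
      moreover have "1 - 9 / pi^2 + \<epsilon> / 100 > 0" using pi2 e by linarith
      ultimately have "card {n \<in> A. n mod 36 = u} \<noteq> 0"
      proof (intro notI)
        assume h: "res_density A x u > 1 - 9 / pi^2 + \<epsilon> / 100" "u < 36" "1 - 9 / pi^2 + \<epsilon> / 100 > 0"
          and c0: "card {n \<in> A. n mod 36 = u} = 0"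
        have "res_density A x u = 0" unfolding res_density_def c0 by simp
        then show False using h by linarith
      qed
      then have "{n \<in> A. n mod 36 = u} \<noteq> {}" by (metis card.empty)
      then show ?thesis using \<open>u < 36\<close> by auto
    qed
    obtain u1 u2 where u: "u1 \<in> U_set \<epsilon> A x" "u2 \<in> U_set \<epsilon> A x" "u1 \<noteq> u2"
      using two_elems[OF U2] by blast
    obtain b1 where b1: "b1 \<in> A" "b1 mod 36 = u1" "u1 < 36" using ne[OF u(1)] by blast
    obtain b2 where b2: "b2 \<in> A" "b2 mod 36 = u2" "u2 < 36" using ne[OF u(2)] by blast
    have q11: "Qc (u1 + u1)" using K[OF u(1) b1(1)] b1 by simp
    have q12: "Qc (u1 + u2)" using K[OF u(1) b2(1)] b2 by simp
    have q22: "Qc (u2 + u2)" using K[OF u(2) b2(1)] b2 by simp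
    have An: "n mod 36 < 36 \<and> Qc (u1 + n mod 36) \<and> Qc (u2 + n mod 36)" if "n \<in> A" for n
      using K[OF u(1) that] K[OF u(2) that] by simp
    from comb[OF b1(3) b2(3) u(3) q11 q12 q22]
    consider (c4) "\<forall>v<36. Qc (u1+v) \<and> Qc (u2+v) \<longrightarrow> v mod 4 = 0"
      | (c9) "\<forall>v<36. Qc (u1+v) \<and> Qc (u2+v) \<longrightarrow> v mod 9 = 0"
      | (c2) "\<forall>v<36. Qc (u1+v) \<and> Qc (u2+v) \<longrightarrow> v mod 4 = 2"
      | (ca) a where "a \<in> {1..8}" "\<forall>v<36. Qc (u1+v) \<and> Qc (u2+v) \<longrightarrow> okr v a"
      by (elim disjE bexE) blast+
    then show "(\<forall>n\<in>A. even n) \<and>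
       (\<exists>a\<in>{1..8::nat}. \<forall>n\<in>A.
          (n mod 4 = 2 \<longleftrightarrow> n mod 9 = a) \<and>
          (n mod 4 = 0 \<longleftrightarrow> n mod 9 = 9 - a))"
    proof cases
      case c4
      have "A \<subseteq> {n. 4 dvd n}"
      proof
        fix n assume nA: "n \<in> A"
        have "n mod 36 mod 4 = 0" using c4[rule_format, of "n mod 36"] An[OF nA] by simp
        then show "n \<in> {n. 4 dvd n}" by (simp add: m4 dvd_eq_mod_eq_0)
      qed
      then show ?thesis using n4 by blast
    next
      case c9
      have "A \<subseteq> {n. 9 dvd n}"
      proof
        fix n assume nA: "n \<in> A"
        have "n mod 36 mod 9 = 0" using c9[rule_format, of "n mod 36"] An[OF nA] by simp
        then show "n \<in> {n. 9 dvd n}" by (simp add: m9 dvd_eq_mod_eq_0)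
      qed
      then show ?thesis using n9 by blast
    next
      case c2
      have "A \<subseteq> {n. n mod 4 = 2}"
      proof
        fix n assume nA: "n \<in> A"
        have "n mod 36 mod 4 = 2" using c2[rule_format, of "n mod 36"] An[OF nA] by simp
        then show "n \<in> {n. n mod 4 = 2}" by (simp add: m4)
      qed
      then show ?thesis using n2 by blast
    next
      case (ca a)
      have ok: "okr (n mod 36) a" if "n \<in> A" for n
      proof -
        have h: "n mod 36 < 36 \<and> Qc (u1 + n mod 36) \<and> Qc (u2 + n mod 36)" using An[OF that] .
        show ?thesis by (rule ca(2)[rule_format]) (use h in auto)
      qed
      have all: "even n \<and> (n mod 4 = 2 \<longleftrightarrow> n mod 9 = a) \<and> (n mod 4 = 0 \<longleftrightarrow> n mod 9 = 9 - a)" if nA: "n \<in> A" for n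
      proof -
        have h: "even (n mod 36) \<and> (n mod 36 mod 4 = 2 \<longleftrightarrow> n mod 36 mod 9 = a) \<and> (n mod 36 mod 4 = 0 \<longleftrightarrow> n mod 36 mod 9 = 9 - a)"
          using ok[OF nA] unfolding okr_def .
        have e1: "n mod 36 mod 4 = n mod 4" by (rule m4)
        have e2: "n mod 36 mod 9 = n mod 9" by (rule m9)
        have e3: "even (n mod 36) = even n" by (rule m2)
        show ?thesis using h unfolding e1 e2 e3 .
      qed
      show ?thesis
      proof (rule conjI)
        show "\<forall>n\<in>A. even n" using all by blast
        show "\<exists>a\<in>{1..8::nat}. \<forall>n\<in>A. (n mod 4 = 2 \<longleftrightarrow> n mod 9 = a) \<and> (n mod 4 = 0 \<longleftrightarrow> n mod 9 = 9 - a)"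
          by (rule bexI[of _ a]) (use all ca(1) in auto)
      qed
    qed
  qed
qed

end
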